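(* For each $2p\in\{26, 266, 40, 56, 88, 104, 136, 152, 184, 200, 232, 248, 280, 296, 328, 344, 34, 58, 82, 106, 130, 154, 178, 202, 226, 250, 274, 298, 322, 346\}$ there exists a cyclic DCA$(4,2p+1;2p)$ satisfying P1 and P2.
   Context: A difference covering array DCA$(k,\eta;n)$ over $\mathbb{Z}_n$ (a cyclic DCA) is an $\eta\times k$ matrix $Q=[q(i,j)]$ with entries in $\mathbb{Z}_n$ such that for every pair of distinct columns $j,j'$ the multiset $\{q(i,j)-q(i,j') : 0\le i\le \eta-1\}$ contains every element of $\mathbb{Z}_n$ at least once. A DCA$(k,n+1;n)$ is taken in normalized form: all entries of its last row (row $n$) and last column (column $k-1$) equal $0$. It satisfies P1 if $0$ occurs at least twice in every column, and P2 if for all distinct columns $j,j'$ with $j\neq k-1\neq j'$, the set $\{q(i,j)-q(i,j') : 0\le i\le n-1\}$ equals $\mathbb{Z}_n\setminus\{0\}$. *)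

theory Defs
  imports Main
begin

text \<open>An eta x k matrix over Z_n is represented as Q :: nat => nat => int, where
  Q i j is the entry in row i, column j (0 <= i < eta, 0 <= j < k), and entries
  are the canonical representatives 0..n-1 of Z_n.\<close>

definition is_matrix_Zn :: "nat \<Rightarrow> nat \<Rightarrow> nat \<Rightarrow> (nat \<Rightarrow> nat \<Rightarrow> int) \<Rightarrow> bool" where
  "is_matrix_Zn k eta n Q \<longleftrightarrow>
     (\<forall>i<eta. \<forall>j<k. 0 \<le> Q i j \<and> Q i j < int n)"

definition is_DCA :: "nat \<Rightarrow> nat \<Rightarrow> nat \<Rightarrow> (nat \<Rightarrow> nat \<Rightarrow> int) \<Rightarrow> bool" where
  "is_DCA k eta n Q \<longleftrightarrow> is_matrix_Zn k eta n Q \<and>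
     (\<forall>j<k. \<forall>j'<k. j \<noteq> j' \<longrightarrow>
        (\<forall>d\<in>{0..<int n}. \<exists>i<eta. (Q i j - Q i j') mod int n = d))"

definition normalized_DCA :: "nat \<Rightarrow> nat \<Rightarrow> (nat \<Rightarrow> nat \<Rightarrow> int) \<Rightarrow> bool" where
  "normalized_DCA k n Q \<longleftrightarrow> is_DCA k (n + 1) n Q \<and>
     (\<forall>j<k. Q n j = 0) \<and> (\<forall>i<n + 1. Q i (k - 1) = 0)"

definition DCA_P1 :: "nat \<Rightarrow> nat \<Rightarrow> (nat \<Rightarrow> nat \<Rightarrow> int) \<Rightarrow> bool" where
  "DCA_P1 k n Q \<longleftrightarrow> (\<forall>j<k. 2 \<le> card {i. i < n + 1 \<and> Q i j = 0})"

definition DCA_P2 :: "nat \<Rightarrow> nat \<Rightarrow> (nat \<Rightarrow> nat \<Rightarrow> int) \<Rightarrow> bool" where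
  "DCA_P2 k n Q \<longleftrightarrow> (\<forall>j<k - 1. \<forall>j'<k - 1. j \<noteq> j' \<longrightarrow>
     {(Q i j - Q i j') mod int n | i. i < n} = {1..<int n})"

end

theory Submission
  imports Defs
begin

function rs :: "int \<Rightarrow> int \<Rightarrow> int list \<Rightarrow> bool" where
  "rs lo hi xs = (if hi \<le> lo + 1 then (xs \<noteq> [] \<and> (\<forall>x\<in>set xs. x = lo)) else
     (let m = (lo + hi) div 2 in rs lo m (filter (\<lambda>x. x < m) xs) \<and> rs m hi (filter (\<lambda>x. m \<le> x) xs)))"
  by auto
termination by (relation "measure (\<lambda>(lo,hi,xs). nat (hi - lo))") auto

declare rs.simps[simp del]

lemma rs_set: "rs lo hi xs \<Longrightarrow> lo < hi \<Longrightarrow> set xs = {lo..<hi}"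
proof (induction lo hi xs rule: rs.induct)
  case (1 lo hi xs)
  show ?case
  proof (cases "hi \<le> lo + 1")
    case True
    then have "hi = lo + 1" using 1 by simp
    moreover have "xs \<noteq> [] \<and> (\<forall>x\<in>set xs. x = lo)" using 1(3) True by (simp add: rs.simps[of lo hi xs])
    ultimately show ?thesis by (cases xs) auto
  next
    case False
    define m where "m = (lo + hi) div 2"
    have m: "lo < m" "m < hi" using False unfolding m_def by auto
    have r: "rs lo m (filter (\<lambda>x. x < m) xs)" "rs m hi (filter (\<lambda>x. m \<le> x) xs)"
      using 1(3) False by (simp_all add: rs.simps[of lo hi xs] m_def Let_def)
    have A: "set (filter (\<lambda>x. x < m) xs) = {lo..<m}" using 1(1)[OF False m_def] r m by blast
    have B: "set (filter (\<lambda>x. m \<le> x) xs) = {m..<hi}" using 1(2)[OF False m_def] r m by blast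
    have "set xs = set (filter (\<lambda>x. x < m) xs) \<union> set (filter (\<lambda>x. m \<le> x) xs)" by auto
    also have "\<dots> = {lo..<m} \<union> {m..<hi}" by (simp only: A B)
    finally have "set xs = {lo..<m} \<union> {m..<hi}" .
    then show ?thesis using m by auto
  qed
qed

lemma set_map_zip: "set (map (\<lambda>(x,y). f x y) (zip xs ys)) = {f (xs!i) (ys!i) | i. i < min (length xs) (length ys)}"
  by (auto simp: set_zip)

lemma neg_set:
  assumes "{F i mod int n | i. i < n} = {1..<int n}"
  shows "{(- F i) mod int n | i. i < n} = {1..<int n}"
proof (intro equalityI subsetI)
  fix d assume "d \<in> {(- F i) mod int n | i. i < n}"
  then obtain i where i: "i < n" "d = (- F i) mod int n" by auto
  have "F i mod int n \<in> {1..<int n}" using assms i(1) by blast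
  then have "F i mod int n \<noteq> 0" "n > 0" by auto
  then have "(- F i) mod int n \<noteq> 0" by (simp add: zmod_zminus1_not_zero)
  moreover have "0 \<le> (- F i) mod int n" "(- F i) mod int n < int n" using \<open>n > 0\<close> by auto
  ultimately have "1 \<le> (- F i) mod int n" by linarith
  then show "d \<in> {1..<int n}" using i \<open>(- F i) mod int n < int n\<close> by auto
next
  fix d assume d: "d \<in> {1..<int n}"
  then have "int n - d \<in> {1..<int n}" by auto
  then have "int n - d \<in> {F i mod int n | i. i < n}" using assms by simp
  then obtain i where i: "i < n" "F i mod int n = int n - d" by auto
  have "(- F i) mod int n = (- (F i mod int n)) mod int n" by (simp add: mod_minus_eq)
  also have "\<dots> = (d - int n) mod int n" using i by simp
  also have "\<dots> = d" using d by (simp add: mod_pos_pos_trivial)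
  finally show "d \<in> {(- F i) mod int n | i. i < n}" using i by (metis (mono_tags, lifting) mem_Collect_eq)
qed

lemma setc: assumes "\<And>i. i < n \<Longrightarrow> f i = g i" shows "{f i | i. i < n} = {g i | i. i < n}"
proof -
  have "{f i | i. i < n} = f ` {..<n}" by blast
  also have "\<dots> = g ` {..<n}" using assms by (intro image_cong) auto
  also have "\<dots> = {g i | i. i < n}" by blast
  finally show ?thesis .
qed

definition Qf :: "nat \<Rightarrow> (nat \<Rightarrow> int) \<Rightarrow> (nat \<Rightarrow> int) \<Rightarrow> nat \<Rightarrow> nat \<Rightarrow> int" where
  "Qf n b c i j = (if i < n then (if j = 0 then int i else if j = 1 then b i else if j = 2 then c i else 0) else 0)"

lemma gen_fun:
  fixes n :: nat and b c :: "nat \<Rightarrow> int"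
  assumes n2: "2 \<le> n"
    and rb: "\<forall>i<n. 0 \<le> b i \<and> b i < int n" and sb: "\<forall>v\<in>{0..<int n}. \<exists>i<n. b i = v"
    and rc: "\<forall>i<n. 0 \<le> c i \<and> c i < int n" and sc: "\<forall>v\<in>{0..<int n}. \<exists>i<n. c i = v"
    and d10: "{(b i - int i) mod int n | i. i < n} = {1..<int n}"
    and d20: "{(c i - int i) mod int n | i. i < n} = {1..<int n}"
    and d21: "{(c i - b i) mod int n | i. i < n} = {1..<int n}"
  shows "normalized_DCA 4 n (Qf n b c) \<and> DCA_P1 4 n (Qf n b c) \<and> DCA_P2 4 n (Qf n b c)"
proof -
  let ?Q = "Qf n b c"
  have col: "(\<forall>i<n. 0 \<le> ?Q i j \<and> ?Q i j < int n) \<and> (\<forall>v\<in>{0..<int n}. \<exists>i<n. ?Q i j = v)" if "j < 3" for j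
  proof -
    have "j = 0 \<or> j = 1 \<or> j = 2" using that by auto
    then show ?thesis
    proof (elim disjE)
      assume "j = 0"
      then show ?thesis unfolding Qf_def by (auto intro!: exI[where x="nat v" for v])
    next
      assume "j = 1" then show ?thesis using rb sb unfolding Qf_def by auto
    next
      assume "j = 2" then show ?thesis using rc sc unfolding Qf_def by auto
    qed
  qed
  have pair: "{(?Q i j - ?Q i j') mod int n | i. i < n} = {1..<int n}" if "j < 3" "j' < 3" "j \<noteq> j'" for j j'
  proof -
    have cases: "(j,j') \<in> {(1,0),(2,0),(2,1),(0,1),(0,2),(1,2)}" using that by auto
    show ?thesis
    proof -
      have a: "{(?Q i 1 - ?Q i 0) mod int n | i. i < n} = {1..<int n}"
        using setc[of n "\<lambda>i. (?Q i 1 - ?Q i 0) mod int n" "\<lambda>i. (b i - int i) mod int n"] d10 by (simp add: Qf_def)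
      have b': "{(?Q i 2 - ?Q i 0) mod int n | i. i < n} = {1..<int n}"
        using setc[of n "\<lambda>i. (?Q i 2 - ?Q i 0) mod int n" "\<lambda>i. (c i - int i) mod int n"] d20 by (simp add: Qf_def)
      have c': "{(?Q i 2 - ?Q i 1) mod int n | i. i < n} = {1..<int n}"
        using setc[of n "\<lambda>i. (?Q i 2 - ?Q i 1) mod int n" "\<lambda>i. (c i - b i) mod int n"] d21 by (simp add: Qf_def)
      have na: "{(?Q i 0 - ?Q i 1) mod int n | i. i < n} = {1..<int n}"
        using neg_set[OF a] by simp
      have nb: "{(?Q i 0 - ?Q i 2) mod int n | i. i < n} = {1..<int n}"
        using neg_set[OF b'] by simp
      have nc: "{(?Q i 1 - ?Q i 2) mod int n | i. i < n} = {1..<int n}"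
        using neg_set[OF c'] by simp
      show ?thesis using cases a b' c' na nb nc by auto
    qed
  qed
  have Qn: "?Q n j = 0" for j :: nat unfolding Qf_def by simp
  have Q3: "?Q i 3 = 0" for i :: nat unfolding Qf_def by simp
  have mat: "is_matrix_Zn 4 (n+1) n ?Q"
    unfolding is_matrix_Zn_def
  proof (intro allI impI)
    fix i j :: nat assume "i < n + 1" "j < 4"
    show "0 \<le> ?Q i j \<and> ?Q i j < int n"
    proof (cases "i < n \<and> j < 3")
      case True then show ?thesis using col by blast
    next
      case False
      then have "?Q i j = 0" unfolding Qf_def using \<open>j < 4\<close> by auto
      then show ?thesis using n2 by simp
    qed
  qed
  have cov: "\<forall>d\<in>{0..<int n}. \<exists>i<n+1. (?Q i j - ?Q i j') mod int n = d"
    if hj: "j < 4" "j' < 4" "j \<noteq> j'" for j j'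
  proof
    fix d assume d: "d \<in> {0..<int n}"
    show "\<exists>i<n+1. (?Q i j - ?Q i j') mod int n = d"
    proof (cases "d = 0")
      case True then show ?thesis by (intro exI[where x=n]) (simp add: Qn)
    next
      case False
      then have d1: "d \<in> {1..<int n}" using d by auto
      consider "j < 3" "j' < 3" | "j = 3" "j' < 3" | "j < 3" "j' = 3" using hj by linarith
      then show ?thesis
      proof cases
        case 1
        then have "d \<in> {(?Q i j - ?Q i j') mod int n | i. i < n}" using pair[of j j'] hj d1 by simp
        then obtain i where "i < n" "(?Q i j - ?Q i j') mod int n = d" by auto
        then show ?thesis by (intro exI[where x=i]) simp
      next
        case 2
        have "int n - d \<in> {0..<int n}" using d1 by auto
        then obtain i where i: "i < n" "?Q i j' = int n - d" using col[OF 2(2)] by blast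
        have "(?Q i j - ?Q i j') mod int n = (d - int n) mod int n" using i 2 by (simp add: Q3)
        also have "\<dots> = d" using d1 by (simp add: mod_pos_pos_trivial)
        finally show ?thesis using i by (intro exI[where x=i]) simp
      next
        case 3
        then obtain i where "i < n" "?Q i j = d" using col[OF 3(1)] d by blast
        then show ?thesis using 3 d by (intro exI[where x=i]) (simp add: Q3)
      qed
    qed
  qed
  have p1: "DCA_P1 4 n ?Q"
    unfolding DCA_P1_def
  proof (intro allI impI)
    fix j :: nat assume j: "j < 4"
    obtain i0 where i0: "i0 < n" "?Q i0 j = 0"
    proof (cases "j < 3")
      case True then show ?thesis using col[OF True] n2 that by force
    next
      case False then show ?thesis using that[of 0] n2 j unfolding Qf_def by auto
    qed
    have "{i0, n} \<subseteq> {i. i < n + 1 \<and> ?Q i j = 0}" using i0 by (auto simp: Qn)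
    moreover have "card {i0, n} = 2" using i0 by simp
    ultimately show "2 \<le> card {i. i < n + 1 \<and> ?Q i j = 0}"
      by (metis card_mono finite_Collect_conjI finite_Collect_less_nat)
  qed
  have p2: "DCA_P2 4 n ?Q" unfolding DCA_P2_def using pair by simp
  have "is_DCA 4 (n+1) n ?Q" unfolding is_DCA_def using mat cov by blast
  then have "normalized_DCA 4 n ?Q" unfolding normalized_DCA_def using Qn Q3 by simp
  then show ?thesis using p1 p2 by simp
qed

definition chk :: "nat \<Rightarrow> int list \<Rightarrow> int list \<Rightarrow> bool" where
  "chk n B C \<longleftrightarrow> length B = n \<and> length C = n \<and> rs 0 (int n) B \<and> rs 0 (int n) C \<and>
     rs 1 (int n) (map (\<lambda>(x,y). (x - y) mod int n) (zip B (map int [0..<n]))) \<and>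
     rs 1 (int n) (map (\<lambda>(x,y). (x - y) mod int n) (zip C (map int [0..<n]))) \<and>
     rs 1 (int n) (map (\<lambda>(x,y). (y - x) mod int n) (zip B C))"

lemma gen:
  assumes "chk n B C" "2 \<le> n"
  shows "\<exists>Q. normalized_DCA 4 n Q \<and> DCA_P1 4 n Q \<and> DCA_P2 4 n Q"
proof -
  have L: "length B = n" "length C = n" using assms(1) unfolding chk_def by auto
  have n0: "0 < int n" "1 < int n" using assms(2) by auto
  have sB: "set B = {0..<int n}" using assms(1) rs_set n0 unfolding chk_def by blast
  have sC: "set C = {0..<int n}" using assms(1) rs_set n0 unfolding chk_def by blast
  have s1: "set (map (\<lambda>(x,y). (x - y) mod int n) (zip B (map int [0..<n]))) = {1..<int n}"
    using assms(1) rs_set n0 unfolding chk_def by blast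
  have s2: "set (map (\<lambda>(x,y). (x - y) mod int n) (zip C (map int [0..<n]))) = {1..<int n}"
    using assms(1) rs_set n0 unfolding chk_def by blast
  have s3: "set (map (\<lambda>(x,y). (y - x) mod int n) (zip B C)) = {1..<int n}"
    using assms(1) rs_set n0 unfolding chk_def by blast
  let ?b = "\<lambda>i. B ! i" and ?c = "\<lambda>i. C ! i"
  have rb: "\<forall>i<n. 0 \<le> ?b i \<and> ?b i < int n" using sB L by (metis atLeastLessThan_iff nth_mem)
  have rc: "\<forall>i<n. 0 \<le> ?c i \<and> ?c i < int n" using sC L by (metis atLeastLessThan_iff nth_mem)
  have sb: "\<forall>v\<in>{0..<int n}. \<exists>i<n. ?b i = v" using sB L by (metis in_set_conv_nth)
  have sc: "\<forall>v\<in>{0..<int n}. \<exists>i<n. ?c i = v" using sC L by (metis in_set_conv_nth)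
  have d10: "{(?b i - int i) mod int n | i. i < n} = {1..<int n}"
    using s1 L setc[of n "\<lambda>i. (B ! i - map int [0..<n] ! i) mod int n" "\<lambda>i. (B ! i - int i) mod int n"]
    unfolding set_map_zip by simp
  have d20: "{(?c i - int i) mod int n | i. i < n} = {1..<int n}"
    using s2 L setc[of n "\<lambda>i. (C ! i - map int [0..<n] ! i) mod int n" "\<lambda>i. (C ! i - int i) mod int n"]
    unfolding set_map_zip by simp
  have d21: "{(?c i - ?b i) mod int n | i. i < n} = {1..<int n}"
    using s3 L unfolding set_map_zip by simp
  show ?thesis using gen_fun[OF assms(2) rb sb rc sc d10 d20 d21] by blast
qed

definition B26 :: "int list" where "B26 = [20,8,7,19,3,2,16,13,25,11,23,24,21,9,6,18,17,5,4,1,15,14,0,12,22,10]"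
definition C26 :: "int list" where "C26 = [14,10,3,22,12,18,1,17,23,16,9,5,8,4,20,0,6,15,21,24,7,13,19,25,2,11]"
lemma chk26: "chk 26 B26 C26" by code_simp
lemma inst26: "\<exists>Q. normalized_DCA 4 26 Q \<and> DCA_P1 4 26 Q \<and> DCA_P2 4 26 Q"
  by (rule gen[OF chk26]) simp

definition B266 :: "int list" where "B266 = [235,87,98,7,233,193,223,246,219,84,126,213,211,209,74,192,203,68,199,32,125,218,58,56,231,191,183,111,46,164,42,40,38,36,97,57,17,243,26,30,256,216,43,3,96,189,149,242,69,4,122,133,131,262,127,258,15,121,252,161,115,214,41,1,227,54,236,240,232,230,253,226,173,0,220,186,146,106,212,159,119,206,172,202,67,185,196,194,65,158,118,78,184,264,47,51,144,104,197,24,35,77,170,130,90,25,143,21,152,156,148,13,169,9,140,182,136,134,265,22,261,208,168,255,120,251,249,247,245,154,114,207,167,260,100,180,229,94,92,153,88,73,166,82,86,179,139,99,72,19,112,205,64,195,60,178,5,187,52,151,48,204,177,124,217,44,137,34,165,163,28,70,157,155,20,18,16,147,145,10,8,6,29,2,215,175,135,228,55,123,108,201,250,254,113,244,109,107,238,14,101,200,160,95,80,224,222,93,85,83,81,66,210,75,79,71,132,225,198,12,105,59,190,188,53,171,49,91,45,176,174,39,37,117,33,31,162,27,50,23,103,63,150,116,76,11,129,89,138,142,102,62,263,248,259,257,128,221,181,141,234,61,110,241,239,237]"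
definition C266 :: "int list" where "C266 = [102,153,10,194,15,235,225,143,133,220,138,128,215,36,123,41,31,118,72,256,77,164,21,241,26,246,103,154,11,195,185,6,226,180,98,52,139,93,83,134,88,175,262,216,170,124,211,165,252,242,160,17,104,191,12,232,150,7,94,145,2,53,140,227,48,135,258,43,33,253,38,28,212,166,156,207,161,115,105,23,243,100,18,141,228,146,136,90,8,95,182,3,126,44,167,85,172,259,80,34,24,75,162,249,203,193,111,101,188,239,96,50,234,224,45,229,86,40,127,178,35,219,173,163,117,71,158,112,199,250,204,25,245,66,189,107,97,51,5,56,179,230,184,174,92,46,0,87,210,261,82,169,159,113,200,251,205,62,149,67,190,108,231,16,236,57,144,1,221,42,129,47,37,257,78,32,119,206,27,247,68,22,73,196,114,201,155,109,63,186,237,58,181,99,222,176,263,217,171,89,79,130,84,74,125,248,202,120,110,197,151,69,192,13,64,54,238,59,49,233,187,177,131,218,39,223,213,264,121,208,29,116,70,254,244,198,152,106,157,14,65,19,9,60,147,4,55,142,132,183,137,91,214,265,255,76,260,81,168,122,209,30,20,240,61,148]"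
lemma chk266: "chk 266 B266 C266" by code_simp
lemma inst266: "\<exists>Q. normalized_DCA 4 266 Q \<and> DCA_P1 4 266 Q \<and> DCA_P2 4 266 Q"
  by (rule gen[OF chk266]) simp

definition B40 :: "int list" where "B40 = [6,21,11,32,0,17,23,34,12,3,35,8,4,29,37,10,36,5,25,24,28,31,33,26,14,27,1,20,2,13,9,22,30,19,7,16,18,15,39,38]"
definition C40 :: "int list" where "C40 = [11,23,5,20,12,35,13,17,28,6,1,32,24,39,18,21,0,31,10,4,36,22,2,25,7,34,14,16,3,27,26,9,19,38,29,8,15,30,37,33]"
lemma chk40: "chk 40 B40 C40" by code_simp
lemma inst40: "\<exists>Q. normalized_DCA 4 40 Q \<and> DCA_P1 4 40 Q \<and> DCA_P2 4 40 Q"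
  by (rule gen[OF chk40]) simp

definition B56 :: "int list" where "B56 = [36,7,1,32,14,21,49,54,40,37,13,0,30,43,19,42,44,41,11,50,18,29,31,2,26,51,23,10,6,33,15,46,52,47,35,16,22,3,55,34,28,25,5,12,38,27,53,24,4,39,17,8,48,45,9,20]"
definition C56 :: "int list" where "C56 = [13,42,45,31,24,43,1,14,25,35,41,7,20,18,16,54,9,47,12,46,44,11,36,38,0,22,4,30,40,51,28,50,5,34,52,19,8,26,48,6,17,27,53,23,32,10,37,39,29,2,49,55,21,3,33,15]"
lemma chk56: "chk 56 B56 C56" by code_simp
lemma inst56: "\<exists>Q. normalized_DCA 4 56 Q \<and> DCA_P1 4 56 Q \<and> DCA_P2 4 56 Q"
  by (rule gen[OF chk56]) simp

definition B88 :: "int list" where "B88 = [35,24,11,9,50,84,23,60,18,69,22,72,71,28,46,29,83,44,15,21,7,77,6,64,66,76,39,32,78,53,51,0,2,85,19,33,14,36,58,68,26,52,87,17,82,49,62,48,3,37,86,45,59,12,79,81,74,13,47,40,42,1,70,8,10,16,27,57,63,65,30,5,75,4,54,41,43,20,34,56,55,73,31,25,67,61,38,80]"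
definition C88 :: "int list" where "C88 = [41,7,24,8,15,63,52,22,75,81,2,86,73,43,18,36,25,55,4,16,65,69,50,14,51,79,60,78,23,61,44,54,39,13,28,68,11,27,26,6,71,83,40,72,87,1,58,46,37,85,74,32,77,31,80,56,3,33,20,62,19,29,34,82,35,67,76,84,17,21,66,64,57,47,38,0,53,59,10,30,49,9,12,48,45,5,42,70]"
lemma chk88: "chk 88 B88 C88" by code_simp
lemma inst88: "\<exists>Q. normalized_DCA 4 88 Q \<and> DCA_P1 4 88 Q \<and> DCA_P2 4 88 Q"
  by (rule gen[OF chk88]) simp

definition B104 :: "int list" where "B104 = [42,68,95,60,50,96,103,61,6,21,59,29,14,48,15,101,74,76,23,92,82,0,31,89,38,85,39,57,83,49,78,25,43,13,2,72,10,8,11,65,67,45,58,33,27,9,79,44,91,40,35,73,51,41,90,93,63,5,66,16,75,20,94,24,87,37,18,84,99,53,98,17,7,69,22,100,19,80,102,4,46,56,47,64,54,32,3,97,55,81,30,28,70,88,71,36,26,12,34,1,86,77,62,52]"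
definition C104 :: "int list" where "C104 = [27,21,31,18,23,1,99,24,71,73,11,52,67,65,79,28,63,45,43,62,59,25,7,32,3,97,75,60,14,77,68,36,58,57,88,2,95,49,19,92,42,17,76,16,34,101,103,22,26,41,15,72,70,9,84,48,10,93,0,94,54,33,20,66,46,53,40,90,38,85,8,4,82,13,80,86,74,5,100,6,51,89,39,30,47,69,55,64,50,37,56,78,91,29,35,102,87,61,44,96,83,81,12,98]"
lemma chk104: "chk 104 B104 C104" by code_simp
lemma inst104: "\<exists>Q. normalized_DCA 4 104 Q \<and> DCA_P1 4 104 Q \<and> DCA_P2 4 104 Q"
  by (rule gen[OF chk104]) simp

definition B136 :: "int list" where "B136 = [128,64,13,135,24,44,91,65,94,106,7,101,20,6,59,1,70,42,111,51,58,78,95,73,116,80,11,109,102,60,63,77,112,108,121,103,76,86,41,99,134,54,29,27,122,22,67,17,110,28,5,19,30,26,35,89,18,62,87,57,74,36,3,75,130,84,93,61,50,34,107,97,38,2,69,131,56,92,125,127,82,72,45,55,120,52,33,105,16,32,21,115,114,46,9,43,12,14,133,39,90,118,47,113,10,88,31,81,40,68,15,117,4,48,85,23,104,126,119,53,0,8,129,83,100,124,49,79,132,98,37,25,96,66,123,71]"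
definition C136 :: "int list" where "C136 = [32,110,88,71,80,38,129,46,45,23,121,98,40,135,113,82,33,111,37,27,61,19,97,50,48,18,89,34,117,14,81,86,76,78,16,51,56,127,92,91,133,103,100,131,25,79,49,90,53,130,116,7,13,31,101,126,109,75,93,42,1,118,17,59,29,114,12,10,57,3,69,62,85,47,96,43,60,102,104,83,5,30,112,123,20,94,52,66,68,22,128,67,21,63,0,107,28,39,8,11,77,15,73,70,105,74,65,54,36,2,125,106,84,134,108,35,64,55,41,6,44,58,124,115,24,122,132,87,72,119,4,26,120,95,9,99]"
lemma chk136: "chk 136 B136 C136" by code_simp
lemma inst136: "\<exists>Q. normalized_DCA 4 136 Q \<and> DCA_P1 4 136 Q \<and> DCA_P2 4 136 Q"
  by (rule gen[OF chk136]) simp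

definition B152 :: "int list" where "B152 = [101,135,78,12,21,0,10,76,118,91,25,115,89,107,102,83,9,52,41,116,5,120,42,104,1,112,50,63,73,95,58,4,145,20,66,151,2,88,81,132,94,143,82,44,57,7,90,108,126,23,29,99,142,56,113,67,45,55,121,35,117,147,53,136,114,32,130,47,54,103,69,15,146,92,70,59,86,8,85,27,26,75,93,71,17,68,18,140,134,60,33,128,150,123,34,51,14,139,49,19,106,79,133,16,122,28,65,31,62,111,149,144,141,127,74,43,137,80,13,87,110,148,97,131,129,64,98,96,125,39,30,84,6,48,38,72,22,40,46,3,37,11,61,124,109,100,138,36,105,119,77,24]"
definition C152 :: "int list" where "C152 = [88,144,23,19,68,22,91,127,70,140,53,121,104,100,75,101,8,26,133,147,64,78,135,27,120,54,51,41,24,16,43,15,80,6,35,77,10,134,105,3,110,48,95,111,96,84,87,67,82,44,73,149,106,38,37,129,36,116,1,109,92,0,117,119,102,42,47,145,50,148,45,49,74,146,31,29,98,122,125,85,46,28,13,141,124,150,83,7,18,126,93,39,118,60,143,81,66,20,97,61,90,132,137,59,114,30,25,21,138,128,65,123,136,12,103,57,40,34,69,113,58,86,33,17,76,62,79,99,56,4,71,55,130,14,63,11,2,142,131,89,72,112,5,151,52,94,115,107,32,108,9,139]"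
lemma chk152: "chk 152 B152 C152" by code_simp
lemma inst152: "\<exists>Q. normalized_DCA 4 152 Q \<and> DCA_P1 4 152 Q \<and> DCA_P2 4 152 Q"
  by (rule gen[OF chk152]) simp

definition B184 :: "int list" where "B184 = [44,135,112,7,168,143,100,150,16,14,125,18,133,67,76,91,141,167,121,30,57,175,144,147,52,134,40,42,84,99,28,94,81,107,113,146,148,23,96,106,88,31,17,11,105,131,72,39,21,130,152,170,0,55,48,38,32,98,36,123,137,71,145,50,53,171,5,10,128,87,92,62,69,34,172,22,8,110,45,74,132,111,56,126,93,119,41,43,9,154,177,163,109,138,129,6,117,122,173,35,33,151,180,63,140,90,77,70,80,166,156,27,20,58,165,174,65,183,25,83,73,26,161,19,24,102,108,139,181,86,157,75,97,162,176,158,120,54,61,118,60,47,13,159,29,114,149,3,37,155,101,182,64,82,116,59,4,66,12,179,153,142,49,115,160,95,1,51,169,103,68,79,85,2,89,15,164,78,136,178,104,127,124,46]"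
definition C184 :: "int list" where "C184 = [134,116,39,45,26,12,143,171,10,18,53,119,84,172,167,109,32,68,17,107,72,148,99,121,130,82,19,3,22,124,31,135,100,20,37,83,174,8,147,123,66,180,1,105,36,76,79,157,168,178,183,59,110,144,103,7,94,118,23,129,104,28,141,87,52,16,169,127,46,96,151,75,40,90,71,115,106,14,69,63,182,60,95,11,160,48,125,33,108,62,153,177,56,78,181,131,4,2,25,5,44,0,155,149,86,34,173,67,162,50,179,161,146,158,137,55,112,136,165,81,152,98,9,133,6,114,43,93,140,38,65,145,88,54,159,163,142,70,29,111,126,156,57,117,24,102,85,77,64,132,21,47,170,42,35,89,154,58,139,49,92,74,13,101,122,176,41,61,80,164,175,113,120,30,97,73,166,138,15,51,150,128,27,91]"
lemma chk184: "chk 184 B184 C184" by code_simp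
lemma inst184: "\<exists>Q. normalized_DCA 4 184 Q \<and> DCA_P1 4 184 Q \<and> DCA_P2 4 184 Q"
  by (rule gen[OF chk184]) simp

definition B200 :: "int list" where "B200 = [161,48,122,105,49,196,164,115,37,44,194,17,199,92,88,73,13,40,166,29,183,14,102,85,89,36,138,41,177,106,136,11,165,132,148,127,151,98,46,109,141,128,182,59,129,190,84,75,27,186,54,77,19,72,90,133,93,78,126,189,103,168,32,39,69,16,198,155,187,64,156,171,45,112,170,87,33,158,6,3,63,154,192,125,9,56,104,135,47,146,114,137,185,152,28,193,31,38,86,149,23,134,52,99,15,130,58,61,107,26,176,131,25,22,30,147,91,118,0,163,101,188,12,79,175,110,124,95,67,184,74,97,159,2,10,53,153,80,160,43,143,94,172,65,35,76,18,121,117,24,96,191,5,82,8,7,111,20,120,123,81,174,62,145,195,70,144,1,57,66,34,157,179,162,68,113,71,60,180,169,21,108,142,119,55,150,178,181,197,4,116,51,139,42,50,167,173,100,140,83]"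
definition C200 :: "int list" where "C200 = [43,100,11,197,59,16,86,76,175,32,7,101,186,148,142,153,107,64,103,5,178,61,51,157,39,96,199,9,155,97,54,124,171,128,82,132,162,133,143,65,3,160,191,48,19,169,66,156,150,37,87,121,146,8,35,73,167,173,183,25,38,140,78,88,99,56,179,196,30,172,34,104,31,188,75,12,47,113,23,120,118,181,18,137,79,36,46,136,110,117,67,41,111,168,2,93,102,53,163,45,198,21,158,68,94,89,159,149,190,57,14,184,91,125,55,192,182,193,170,0,123,180,98,108,174,129,26,116,70,112,147,161,166,165,95,13,187,44,10,40,58,1,138,17,154,176,139,69,135,92,194,164,151,105,122,72,42,24,50,80,83,141,131,77,134,109,106,29,115,177,27,81,126,145,62,33,22,4,90,85,63,20,71,28,114,49,119,189,195,52,74,144,6,185,15,152,127,84,130,60]"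
lemma chk200: "chk 200 B200 C200" by code_simp
lemma inst200: "\<exists>Q. normalized_DCA 4 200 Q \<and> DCA_P1 4 200 Q \<and> DCA_P2 4 200 Q"
  by (rule gen[OF chk200]) simp

definition B232 :: "int list" where "B232 = [193,88,54,72,210,103,126,168,53,139,198,32,157,148,21,123,110,95,226,108,133,15,221,204,82,92,205,31,10,203,94,48,170,16,57,144,85,36,41,124,26,79,141,220,70,231,150,200,49,151,109,195,158,116,62,160,25,136,77,24,13,156,177,120,174,179,45,100,105,196,118,3,209,135,190,176,74,4,146,19,2,207,97,27,46,11,81,35,90,47,65,212,134,84,86,167,178,119,33,172,106,8,230,67,113,75,186,191,194,164,142,83,89,147,214,208,50,183,69,215,181,224,169,107,138,12,37,115,182,59,154,128,29,52,121,131,38,188,66,23,5,51,22,184,225,228,189,39,213,7,166,163,98,43,122,55,73,56,78,63,61,76,125,71,114,96,222,180,153,187,93,87,202,223,18,211,14,143,206,219,117,60,162,227,102,99,145,80,30,216,129,127,197,171,229,40,185,140,218,20,173,44,58,0,161,64,130,159,149,199,165,192,137,104,42,175,9,155,17,152,34,28,1,132,217,111,101,112,6,68,201,91]"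
definition C232 :: "int list" where "C232 = [115,223,10,188,213,56,174,88,95,152,222,104,27,179,86,177,129,112,202,20,123,92,182,36,73,135,230,37,161,168,114,184,17,183,94,200,83,207,142,216,77,224,74,0,49,204,190,132,227,68,54,105,225,71,170,48,91,211,150,180,139,119,82,80,141,220,130,212,3,167,14,65,51,64,62,128,57,99,226,165,29,24,206,41,117,4,138,149,205,100,186,192,61,195,70,133,33,60,166,108,121,127,50,1,203,136,214,109,181,59,146,217,67,96,78,172,9,76,58,201,163,15,106,193,185,155,154,69,157,16,38,120,191,87,18,169,101,111,134,45,55,72,66,52,219,159,46,145,151,148,162,137,221,12,210,13,131,231,26,5,63,23,6,229,21,47,122,32,43,164,102,97,197,144,218,89,53,8,34,81,187,143,198,189,113,84,178,228,85,75,110,173,215,44,42,28,31,7,158,160,79,147,90,176,11,171,22,25,175,196,2,208,107,103,118,125,39,156,98,124,93,35,30,140,19,116,194,40,153,199,126,209]"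
lemma chk232: "chk 232 B232 C232" by code_simp
lemma inst232: "\<exists>Q. normalized_DCA 4 232 Q \<and> DCA_P1 4 232 Q \<and> DCA_P2 4 232 Q"
  by (rule gen[OF chk232]) simp

definition B248 :: "int list" where "B248 = [221,236,219,235,58,28,243,191,218,33,143,50,157,232,43,103,42,148,12,142,73,64,216,139,93,185,115,95,26,37,4,94,62,60,208,202,29,237,40,186,134,140,244,167,69,56,111,154,206,41,135,138,118,17,112,246,5,117,68,106,25,92,83,214,169,132,104,74,189,45,131,182,85,212,16,187,210,245,220,19,125,44,79,99,21,84,8,242,165,0,127,226,230,164,168,86,81,1,51,194,225,120,199,3,90,77,223,207,141,200,240,146,161,153,23,130,198,32,152,75,201,229,195,31,22,205,188,82,241,57,144,66,13,192,224,147,6,9,180,34,53,233,67,59,78,209,91,126,114,228,172,234,113,20,15,175,133,137,163,7,98,100,63,211,173,89,87,170,46,65,76,247,213,96,156,203,109,136,159,35,30,52,183,239,190,217,24,71,102,193,107,151,14,48,184,231,174,145,155,166,105,128,55,150,122,97,176,10,158,197,227,179,70,49,88,11,61,149,27,215,18,204,124,47,54,101,80,178,121,36,160,162,2,177,123,39,38,116,196,119,181,129,171,238,110,72,108,222]"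
definition C248 :: "int list" where "C248 = [175,100,30,9,97,108,242,65,169,18,206,71,99,124,170,53,189,132,220,171,7,16,236,41,23,38,186,221,157,74,20,11,229,164,36,247,195,146,52,111,125,180,68,73,227,188,130,211,145,6,94,199,217,166,240,187,151,78,8,51,167,96,110,39,183,104,40,27,75,62,162,15,91,120,196,149,29,134,88,205,123,12,54,137,139,144,244,215,31,152,230,203,193,160,28,191,63,66,34,55,79,176,122,45,37,14,210,225,235,192,92,143,127,86,138,131,5,208,0,21,35,158,190,201,25,194,32,95,67,106,172,207,83,116,64,121,117,178,204,59,115,214,10,233,13,2,98,159,209,24,128,147,163,156,26,153,179,234,238,85,177,48,202,17,87,58,42,223,197,218,84,129,243,72,224,61,135,80,182,241,165,212,22,49,237,114,148,105,185,150,198,161,133,112,56,93,81,222,126,3,107,4,90,239,101,46,228,103,173,82,142,69,245,118,136,1,47,154,70,57,141,168,44,113,213,226,60,43,219,184,76,155,109,50,174,33,181,200,232,89,19,246,102,119,77,216,140,231]"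
lemma chk248: "chk 248 B248 C248" by code_simp
lemma inst248: "\<exists>Q. normalized_DCA 4 248 Q \<and> DCA_P1 4 248 Q \<and> DCA_P2 4 248 Q"
  by (rule gen[OF chk248]) simp

definition B280 :: "int list" where "B280 = [5,185,244,184,97,221,72,158,49,257,180,150,215,199,8,2,93,189,116,274,45,223,84,24,239,235,52,216,247,17,130,268,41,193,202,102,263,131,96,92,225,125,64,4,139,155,172,78,269,27,70,108,81,39,142,62,173,191,76,212,265,25,44,124,179,61,12,36,47,227,10,88,121,133,228,140,213,111,196,154,211,205,86,104,79,135,132,138,87,7,230,68,95,19,208,260,253,69,176,254,65,183,144,224,119,55,98,276,249,67,80,48,275,73,242,222,143,91,174,152,11,243,264,204,57,255,232,58,9,77,110,168,35,279,28,220,53,151,114,272,51,23,186,166,59,175,258,236,207,187,50,148,1,13,262,200,83,71,194,112,231,85,266,126,277,261,198,118,89,107,160,250,115,259,128,40,273,229,134,234,271,3,206,226,177,21,278,56,147,197,0,210,15,233,248,20,163,129,74,54,171,203,146,46,217,75,218,38,29,237,120,30,195,99,82,22,63,169,14,192,165,123,164,6,117,241,18,16,209,137,240,270,161,33,162,122,103,31,94,32,251,105,26,106,157,141,252,238,127,37,170,90,201,219,188,100,153,109,156,214,245,145,246,66,159,181,178,256,167,267,60,190,101,113,42,182,43,149,136,34]"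
definition C280 :: "int list" where "C280 = [256,230,272,114,44,78,224,209,112,66,176,225,95,205,128,241,108,42,80,257,36,1,32,194,251,109,124,182,163,6,111,30,240,134,187,181,127,153,120,146,96,250,212,274,231,229,164,89,92,57,71,110,20,25,7,121,228,273,160,226,156,50,252,214,211,38,204,62,123,177,31,190,220,14,248,178,148,253,200,77,279,270,119,154,51,49,244,249,103,157,131,130,15,125,8,258,208,82,100,17,136,61,52,234,171,29,155,222,132,137,236,210,135,34,167,221,47,73,243,46,99,41,232,174,264,9,184,269,192,266,191,10,255,85,88,138,188,53,63,126,219,161,139,193,271,129,215,102,183,97,151,90,40,54,87,218,147,33,23,206,59,170,239,133,104,18,35,149,172,217,216,165,75,45,28,158,168,122,263,197,39,261,199,213,24,98,275,262,3,86,116,245,55,74,68,238,107,202,83,277,159,101,19,13,84,69,235,169,152,166,16,185,175,145,247,201,227,2,43,26,76,81,12,93,4,118,195,142,72,106,196,265,140,94,67,141,207,233,143,246,259,70,79,173,64,58,144,189,223,186,91,65,60,105,48,198,268,22,0,237,56,150,179,113,11,278,115,162,203,117,276,5,260,254,267,21,27,242,180,37]"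
lemma chk280: "chk 280 B280 C280" by code_simp
lemma inst280: "\<exists>Q. normalized_DCA 4 280 Q \<and> DCA_P1 4 280 Q \<and> DCA_P2 4 280 Q"
  by (rule gen[OF chk280]) simp

definition B296 :: "int list" where "B296 = [226,223,238,167,94,271,53,235,258,171,261,252,257,71,25,48,145,184,86,288,33,19,122,232,217,256,10,28,253,144,46,120,58,32,29,119,177,68,118,187,65,259,154,255,254,11,61,44,285,207,78,243,173,107,181,228,6,248,150,172,170,284,153,151,133,251,213,219,54,60,125,152,205,51,185,96,93,280,97,275,102,20,157,132,17,47,69,224,134,95,277,168,2,143,189,103,273,164,101,23,34,239,250,148,197,287,286,159,233,272,281,79,121,87,62,276,98,196,105,215,45,84,165,16,278,268,77,108,117,8,137,123,5,192,242,292,41,80,109,236,225,116,169,31,210,4,229,124,1,188,289,216,37,76,126,12,73,260,162,155,274,0,198,75,290,267,85,291,158,72,293,211,174,67,57,279,190,263,265,199,141,15,230,212,222,63,237,156,90,104,149,100,249,140,42,27,270,176,269,136,138,64,262,163,209,7,241,231,245,203,186,264,38,24,74,208,21,3,110,139,70,244,294,59,234,99,182,40,129,147,218,195,266,56,106,115,201,92,142,183,89,128,178,112,18,191,66,204,13,52,161,91,50,88,221,240,214,39,26,36,82,160,193,295,9,283,246,220,114,35,282,135,81,83,22,55,146,131,206,200,14,179,49,43,30,227,130,111,194,127,166,180,113,175,202,247]"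
definition C296 :: "int list" where "C296 = [251,54,192,5,91,118,62,289,227,182,50,35,33,246,186,103,281,48,176,23,85,78,172,239,37,28,168,159,285,240,164,79,155,8,274,205,189,72,156,193,141,102,152,181,267,166,238,203,45,230,144,9,145,294,214,191,83,96,136,111,219,160,190,121,149,42,178,109,47,140,18,167,201,170,6,87,153,268,142,73,11,184,278,223,57,66,266,291,135,130,254,63,271,46,242,25,61,292,82,13,99,26,92,119,261,90,236,137,213,188,194,125,17,70,228,27,51,20,22,101,69,232,10,15,175,148,146,231,269,212,282,65,221,128,208,71,173,44,258,287,273,108,98,177,115,24,86,127,29,88,222,195,277,4,40,263,229,68,36,129,215,280,180,117,55,14,174,105,43,260,162,241,179,290,150,81,19,206,138,217,89,122,12,147,143,38,114,67,131,284,250,283,93,52,0,169,255,264,226,123,243,32,288,293,97,210,202,133,49,126,132,31,59,224,276,247,249,106,272,245,183,56,120,233,171,234,116,7,253,2,112,209,295,100,256,197,157,16,104,185,257,80,248,279,259,110,244,199,161,60,218,1,235,124,58,39,75,154,84,107,211,252,34,113,265,134,76,95,187,198,220,237,21,262,216,77,163,30,64,151,3,94,270,53,139,158,204,41,275,74,200,207,225,286,196,165]"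
lemma chk296: "chk 296 B296 C296" by code_simp
lemma inst296: "\<exists>Q. normalized_DCA 4 296 Q \<and> DCA_P1 4 296 Q \<and> DCA_P2 4 296 Q"
  by (rule gen[OF chk296]) simp

definition B328 :: "int list" where "B328 = [62,107,113,74,204,309,317,4,286,301,51,32,234,175,111,60,312,307,273,34,184,277,313,280,78,105,127,308,256,211,187,8,302,253,269,36,164,147,145,228,198,237,203,138,236,83,225,210,272,221,159,118,144,183,219,26,318,315,181,98,216,197,57,232,214,251,71,242,124,55,295,288,324,9,191,222,196,165,87,16,6,287,93,44,282,149,133,274,230,59,103,182,178,297,327,128,48,323,223,156,238,117,129,20,284,95,169,212,298,63,75,50,28,31,299,104,64,249,125,296,264,131,91,102,136,99,151,188,172,61,245,52,208,199,121,154,262,45,3,226,46,135,227,134,152,267,77,206,106,185,19,278,224,177,321,56,96,5,33,248,132,139,73,112,168,153,259,304,10,239,155,146,240,207,29,54,276,293,69,126,18,285,7,252,130,275,67,270,220,79,189,14,190,97,229,250,292,179,247,158,86,81,143,66,200,279,21,92,310,65,263,120,258,215,101,148,42,49,141,176,180,205,115,40,266,283,11,170,88,25,261,260,326,17,137,150,110,23,13,316,58,319,53,294,68,157,311,38,268,255,43,72,140,305,173,100,12,27,213,90,290,289,89,162,84,291,119,70,22,109,15,142,320,265,209,76,82,257,85,122,194,163,195,30,306,241,1,160,254,233,41,174,202,231,47,246,314,217,271,244,80,167,325,108,116,37,201,300,322,193,123,0,24,235,281,192,218,39,243,186,166,171,303,94,114,161,35,2]"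
definition C328 :: "int list" where "C328 = [4,238,49,6,125,43,149,91,152,119,260,79,308,98,140,231,277,106,121,58,273,183,57,207,284,259,108,195,101,294,316,19,268,247,29,171,93,146,293,159,252,235,120,54,249,162,165,26,245,59,44,326,241,178,88,298,220,186,137,270,69,123,237,87,204,202,56,50,225,210,100,227,221,187,144,322,53,99,24,39,8,70,81,27,0,251,181,74,320,250,156,46,148,75,36,155,197,102,244,307,296,63,253,295,25,282,189,283,280,126,212,234,17,134,92,95,177,203,161,83,173,150,16,314,169,158,224,223,1,103,297,211,325,174,233,66,60,255,28,38,52,190,236,10,313,34,41,310,200,319,324,118,305,67,77,303,301,143,13,291,133,230,113,279,129,131,172,267,160,246,216,142,285,90,85,114,117,31,21,86,136,271,184,219,292,278,64,194,269,286,321,166,112,7,257,138,261,302,196,274,96,323,76,82,89,154,65,311,80,147,164,299,72,170,265,287,228,135,37,111,73,47,132,263,48,30,176,78,229,199,9,239,32,275,109,22,188,218,45,215,180,226,145,130,213,175,68,266,209,242,276,15,205,327,281,3,201,94,217,18,304,315,153,318,193,110,124,290,288,139,168,262,185,51,289,107,272,127,61,42,264,306,300,14,256,115,97,71,84,191,33,122,240,2,104,258,232,179,312,35,157,182,5,23,317,167,105,11,208,243,116,163,309,206,141,151,192,214,40,254,20,222,248,62,12,55,128,198]"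
lemma chk328: "chk 328 B328 C328" by code_simp
lemma inst328: "\<exists>Q. normalized_DCA 4 328 Q \<and> DCA_P1 4 328 Q \<and> DCA_P2 4 328 Q"
  by (rule gen[OF chk328]) simp

definition B344 :: "int list" where "B344 = [80,240,14,337,141,144,279,221,336,220,166,342,120,124,70,161,76,55,318,217,177,104,331,273,160,67,215,157,281,256,202,213,244,332,278,97,41,236,10,325,328,312,258,78,145,44,162,93,197,292,35,270,196,23,91,33,129,287,319,89,181,4,294,317,233,299,198,201,192,156,315,85,148,232,199,313,276,59,254,82,60,323,330,6,149,243,195,309,316,335,251,193,81,255,135,122,56,175,191,46,185,248,247,142,237,187,303,73,268,228,174,334,52,132,71,86,8,119,154,69,136,39,58,297,153,188,306,9,48,223,38,298,176,143,179,50,304,72,190,5,88,327,94,242,216,75,3,338,121,300,231,90,128,204,115,229,225,108,54,285,277,12,302,169,329,260,206,130,296,164,282,226,261,31,51,150,36,123,262,246,21,43,163,105,245,307,219,266,125,28,103,18,32,147,222,286,57,180,126,210,116,159,99,134,333,79,155,230,200,171,211,326,265,263,95,37,284,11,151,2,68,275,66,321,249,24,314,194,152,100,218,118,280,207,203,214,64,252,87,310,113,47,274,234,165,311,178,158,45,308,83,25,269,40,139,253,16,288,62,102,29,20,138,26,272,96,42,77,133,172,290,305,184,267,22,189,140,324,98,238,289,107,15,301,341,27,250,13,49,208,127,182,101,112,183,106,264,131,239,30,205,92,295,65,257,168,114,293,137,235,63,146,17,320,291,61,241,224,170,117,0,167,74,173,1,259,322,186,84,7,343,110,212,271,227,34,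340,19,283,53,209,111,339,109]"
definition C344 :: "int list" where "C344 = [128,62,231,54,32,34,157,318,64,178,299,241,204,322,247,330,172,115,195,78,248,266,33,342,280,59,45,90,12,38,211,10,44,182,159,102,120,154,279,194,324,126,227,209,228,98,175,206,196,242,289,201,56,207,301,218,304,179,313,138,100,158,139,230,240,123,87,150,272,274,177,70,68,74,189,334,36,39,103,173,176,11,51,341,252,155,225,94,112,127,237,14,16,99,77,329,220,71,89,153,296,50,273,321,92,15,285,210,124,166,31,141,264,310,137,309,60,275,271,314,200,75,47,234,104,226,339,326,308,191,287,121,276,335,25,117,244,142,183,86,40,107,131,281,180,251,233,277,84,58,245,101,116,30,85,282,20,2,95,202,332,146,43,294,300,118,163,257,160,262,283,253,236,55,317,249,268,199,7,73,0,343,169,66,140,143,181,65,108,122,193,61,312,259,315,57,216,238,91,53,76,203,229,49,152,3,69,217,184,147,81,41,260,291,93,114,292,263,105,205,88,63,295,298,336,42,243,197,24,186,19,21,164,151,325,17,132,302,337,185,208,267,35,9,4,239,327,5,316,46,29,82,284,18,213,174,144,162,171,165,48,134,119,161,80,278,67,106,328,250,187,198,188,215,307,290,156,22,255,145,232,331,125,130,28,303,323,222,340,110,149,305,136,254,333,129,168,219,1,297,72,26,13,246,212,170,235,338,8,135,37,113,320,286,221,6,288,258,79,270,148,223,27,190,52,23,319,97,256,167,269,265,224,311,109,261,192,111,293,214,96,83,133,306]"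
lemma chk344: "chk 344 B344 C344" by code_simp
lemma inst344: "\<exists>Q. normalized_DCA 4 344 Q \<and> DCA_P1 4 344 Q \<and> DCA_P2 4 344 Q"
  by (rule gen[OF chk344]) simp

definition B34 :: "int list" where "B34 = [12,15,25,21,14,27,30,16,9,22,8,28,4,24,10,23,33,2,5,18,11,7,17,20,6,19,29,32,1,31,0,3,13,26]"
definition C34 :: "int list" where "C34 = [20,17,15,28,26,22,2,33,14,10,7,4,19,16,13,9,24,21,1,31,29,8,6,3,0,30,11,25,5,18,32,12,27,23]"
lemma chk34: "chk 34 B34 C34" by code_simp
lemma inst34: "\<exists>Q. normalized_DCA 4 34 Q \<and> DCA_P1 4 34 Q \<and> DCA_P2 4 34 Q"
  by (rule gen[OF chk34]) simp

definition B58 :: "int list" where "B58 = [42,45,10,13,55,39,33,36,20,14,56,40,53,27,50,24,47,2,34,57,31,25,9,22,6,38,51,16,0,32,26,29,23,7,49,52,17,1,4,46,30,43,37,11,5,8,21,44,18,41,15,28,12,54,48,3,35,19]"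
definition C58 :: "int list" where "C58 = [2,53,39,32,7,11,26,48,52,38,42,46,21,14,29,51,37,41,5,49,13,28,3,36,40,33,8,23,56,20,6,57,43,18,22,15,1,34,27,31,35,10,54,47,4,55,30,45,9,24,17,50,25,0,44,19,12,16]"
lemma chk58: "chk 58 B58 C58" by code_simp
lemma inst58: "\<exists>Q. normalized_DCA 4 58 Q \<and> DCA_P1 4 58 Q \<and> DCA_P2 4 58 Q"
  by (rule gen[OF chk58]) simp

definition B82 :: "int list" where "B82 = [15,48,81,73,16,49,8,33,74,58,17,1,42,34,18,51,10,2,35,60,11,52,36,77,20,12,53,78,37,70,13,5,38,79,71,63,14,80,39,72,64,7,40,32,24,65,57,0,41,25,66,50,9,75,67,26,59,43,76,27,68,19,3,44,69,28,61,4,45,29,62,21,54,46,30,22,55,47,6,31,23,56]"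
definition C82 :: "int list" where "C82 = [33,80,4,10,69,34,28,46,40,17,11,70,23,29,6,53,47,12,59,36,1,77,13,7,66,72,25,2,78,43,20,67,73,26,32,79,3,62,56,21,68,45,51,16,63,57,22,81,75,52,5,64,58,76,41,35,0,18,24,30,65,71,48,42,60,54,19,37,31,8,55,49,14,61,38,44,9,15,50,27,74,39]"
lemma chk82: "chk 82 B82 C82" by code_simp
lemma inst82: "\<exists>Q. normalized_DCA 4 82 Q \<and> DCA_P1 4 82 Q \<and> DCA_P2 4 82 Q"
  by (rule gen[OF chk82]) simp

definition B106 :: "int list" where "B106 = [104,70,89,32,51,17,36,78,74,63,82,48,67,10,52,18,90,56,75,94,37,3,45,41,60,26,68,34,53,19,15,87,23,95,38,27,46,65,84,50,16,35,31,103,92,88,1,96,62,58,100,66,9,28,47,13,2,21,93,6,55,44,40,59,25,97,33,29,101,14,86,105,71,7,79,22,11,30,49,98,64,83,102,91,57,0,72,8,4,76,42,61,80,99,12,54,73,69,5,24,20,39,81,77,43,85]"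
definition C106 :: "int list" where "C106 = [52,89,73,82,66,103,87,46,55,67,104,88,19,28,40,24,61,45,29,13,22,6,71,27,11,101,7,97,81,12,74,5,70,54,10,75,59,96,80,64,48,32,41,78,90,99,30,95,26,35,47,31,93,77,8,98,57,94,25,62,18,83,92,76,60,44,56,65,102,86,17,1,91,50,34,43,2,39,23,85,69,53,37,49,33,42,79,38,100,84,15,105,36,20,4,16,0,9,21,58,14,51,63,72,3,68]"
lemma chk106: "chk 106 B106 C106" by code_simp
lemma inst106: "\<exists>Q. normalized_DCA 4 106 Q \<and> DCA_P1 4 106 Q \<and> DCA_P2 4 106 Q"
  by (rule gen[OF chk106]) simp

definition B130 :: "int list" where "B130 = [82,5,21,88,90,13,94,96,19,35,23,39,106,43,31,98,100,37,118,41,57,124,61,128,116,67,69,122,59,10,77,65,81,83,85,87,89,91,28,16,18,20,101,38,26,42,30,32,113,36,52,40,107,58,125,48,129,117,68,121,123,9,127,64,80,3,84,7,74,76,27,15,17,33,86,102,25,92,29,45,47,114,51,104,55,108,110,112,49,0,53,120,6,73,126,63,14,2,4,71,8,75,12,79,95,97,34,22,24,105,93,109,111,99,50,103,119,56,44,46,62,115,1,54,70,72,60,11,78,66]"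
definition C130 :: "int list" where "C130 = [5,59,51,9,32,125,13,101,77,82,110,128,86,44,111,95,79,63,29,96,75,33,121,14,81,60,18,98,17,22,45,99,26,49,7,30,118,76,34,36,85,4,61,84,21,65,54,103,69,71,115,104,88,119,12,40,58,8,39,41,25,108,123,42,47,10,93,43,27,11,120,109,28,124,126,105,94,78,62,67,90,113,6,112,117,15,129,48,97,102,0,114,106,64,66,50,3,83,2,116,35,19,68,52,57,80,38,53,37,107,70,23,46,87,92,55,73,31,72,56,100,89,16,122,127,20,74,1,24,91]"
lemma chk130: "chk 130 B130 C130" by code_simp
lemma inst130: "\<exists>Q. normalized_DCA 4 130 Q \<and> DCA_P1 4 130 Q \<and> DCA_P2 4 130 Q"
  by (rule gen[OF chk130]) simp

definition B154 :: "int list" where "B154 = [2,113,19,66,23,83,117,10,147,40,87,121,27,138,108,91,48,31,1,112,18,129,35,69,116,99,146,26,86,56,90,137,120,13,60,94,0,124,17,64,21,81,51,98,55,102,85,132,25,59,106,89,46,29,153,33,16,140,20,67,114,97,144,24,148,118,101,71,105,75,135,15,152,32,79,49,109,143,126,6,53,36,70,130,100,134,104,151,57,14,74,44,78,61,95,65,125,5,142,22,82,52,9,133,39,150,43,103,73,30,77,47,107,141,111,4,128,34,68,38,8,145,115,72,42,12,149,119,76,136,93,63,123,80,50,110,3,127,84,54,37,7,131,11,58,41,88,45,28,62,122,92,139,96]"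
definition C154 :: "int list" where "C154 = [142,50,125,1,140,61,46,76,151,27,57,42,40,25,55,53,115,36,143,128,49,34,32,17,47,122,152,137,135,88,150,103,24,131,84,69,144,20,127,3,65,63,93,123,31,138,136,12,119,104,134,132,117,38,145,130,51,4,66,96,126,124,77,139,15,45,43,73,58,11,86,148,146,54,7,114,35,97,95,80,110,108,16,14,44,106,59,89,87,149,147,100,85,6,68,98,19,81,2,141,62,92,0,107,28,13,120,118,71,133,9,116,37,99,52,82,112,33,18,48,78,153,29,91,121,74,72,102,10,8,70,23,21,83,113,111,64,94,79,109,30,60,90,75,105,26,56,41,39,101,22,129,5,67]"
lemma chk154: "chk 154 B154 C154" by code_simp
lemma inst154: "\<exists>Q. normalized_DCA 4 154 Q \<and> DCA_P1 4 154 Q \<and> DCA_P2 4 154 Q"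
  by (rule gen[OF chk154]) simp

definition B178 :: "int list" where "B178 = [18,145,94,132,170,30,142,2,129,167,42,80,103,156,90,39,3,26,153,117,51,15,127,91,40,152,27,65,14,37,1,128,77,11,64,102,125,163,112,76,10,137,101,124,88,22,164,113,151,85,138,176,21,59,8,46,99,122,175,35,73,7,60,98,32,70,19,57,110,148,97,135,69,33,160,109,43,81,119,172,106,55,93,146,6,118,67,16,158,92,130,168,28,66,104,157,17,144,4,116,154,29,52,105,143,166,41,79,13,155,89,53,165,25,78,12,50,177,141,75,24,62,115,49,87,140,0,38,150,114,63,86,139,162,126,149,9,136,100,123,161,36,74,23,61,173,48,71,20,58,111,134,83,47,174,34,72,95,133,171,31,84,107,56,5,147,96,45,68,121,159,108,131,169,44,82,120,54]"
definition C178 :: "int list" where "C178 = [51,167,16,43,70,8,174,112,50,166,143,81,158,46,34,150,127,115,142,30,107,84,161,138,76,64,130,157,95,83,60,176,114,13,79,106,5,121,59,125,24,140,28,105,171,159,136,163,101,0,66,4,170,19,135,73,139,38,104,42,69,146,123,61,49,165,103,41,18,45,72,10,87,153,91,118,17,133,71,137,36,63,90,156,94,82,20,47,113,12,128,155,93,120,58,124,151,89,27,15,131,108,96,162,100,177,154,3,80,57,134,22,99,37,14,2,29,145,33,110,48,75,52,40,67,44,160,98,175,152,1,78,144,132,109,97,35,62,39,116,54,31,147,85,23,11,77,65,92,119,7,173,111,88,26,53,169,68,6,122,149,126,25,141,168,56,172,21,9,164,102,129,117,55,32,148,86,74]"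
lemma chk178: "chk 178 B178 C178" by code_simp
lemma inst178: "\<exists>Q. normalized_DCA 4 178 Q \<and> DCA_P1 4 178 Q \<and> DCA_P2 4 178 Q"
  by (rule gen[OF chk178]) simp

definition B202 :: "int list" where "B202 = [197,131,96,92,127,123,158,53,88,154,119,115,49,45,10,146,142,107,41,138,173,37,33,200,165,29,64,161,126,192,56,21,188,52,87,83,17,184,180,114,110,44,40,176,141,106,102,67,133,199,32,28,94,129,125,90,55,121,187,152,16,183,117,113,148,12,8,74,109,175,39,105,171,35,101,66,62,128,93,58,194,159,54,19,85,50,186,182,116,81,77,143,7,42,108,3,139,34,170,65,201,166,162,26,61,57,193,189,22,18,84,150,185,80,14,181,76,111,177,72,6,2,169,103,68,134,99,95,130,196,60,25,91,157,122,118,153,48,13,149,145,79,75,9,5,71,36,172,137,1,168,164,98,63,160,195,59,24,191,156,20,86,51,47,82,78,43,179,144,140,4,70,136,0,167,31,198,132,97,163,27,23,190,124,89,155,120,15,151,147,112,46,11,178,73,38,174,69,104,100,135,30]"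
definition C202 :: "int list" where "C202 = [5,127,124,198,17,91,112,186,106,103,201,174,94,67,165,85,58,55,177,150,70,168,40,37,135,132,153,25,123,120,117,114,10,108,28,102,22,19,194,13,87,7,182,1,99,96,170,66,63,161,81,54,152,173,45,143,39,36,33,30,128,125,146,119,140,137,110,6,27,24,122,18,15,113,9,107,181,178,74,71,92,190,163,59,56,154,175,148,68,166,139,35,133,53,151,23,44,118,38,11,32,130,2,100,121,195,14,88,109,82,79,76,97,171,192,189,162,183,180,52,73,147,144,64,61,159,156,129,49,46,43,141,138,34,31,4,126,200,197,16,90,111,84,105,78,75,72,93,191,188,185,57,179,176,48,69,167,164,60,158,155,51,149,21,42,116,12,134,131,3,101,199,95,193,89,86,184,104,0,98,196,169,65,187,83,80,77,50,172,145,142,62,160,157,29,26,47,20,41,115,136,8]"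
lemma chk202: "chk 202 B202 C202" by code_simp
lemma inst202: "\<exists>Q. normalized_DCA 4 202 Q \<and> DCA_P1 4 202 Q \<and> DCA_P2 4 202 Q"
  by (rule gen[OF chk202]) simp

definition B226 :: "int list" where "B226 = [163,0,214,126,189,64,89,39,140,52,2,65,15,191,28,204,79,104,54,4,218,55,80,68,206,81,219,169,6,69,170,82,70,133,45,33,209,159,109,172,197,185,210,85,223,211,161,111,174,86,149,99,87,225,100,50,113,138,13,76,101,164,152,215,14,115,178,128,78,141,166,3,217,167,192,142,17,193,105,168,5,106,56,194,182,19,195,107,57,158,221,20,83,146,96,46,34,59,122,72,173,198,186,23,48,224,212,162,112,175,125,75,213,201,38,63,51,114,139,127,77,102,90,153,216,53,116,66,16,41,29,92,42,180,130,118,143,18,156,144,94,44,220,132,120,32,208,196,108,171,121,184,21,9,147,22,47,35,60,10,73,136,11,74,24,49,150,62,12,188,176,88,151,26,202,1,177,165,190,27,203,40,103,91,154,179,129,117,67,205,155,30,93,43,181,131,119,31,207,157,145,95,7,183,58,8,71,134,84,222,97,160,110,135,123,148,98,199,36,61,124,187,137,200,37,25]"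
definition C226 :: "int list" where "C226 = [104,28,210,102,26,208,100,24,206,211,135,59,209,133,57,207,50,168,92,16,198,122,127,196,88,44,162,199,123,160,116,121,77,1,119,75,225,149,186,223,2,71,189,145,37,219,30,67,217,109,33,183,139,31,213,137,174,66,22,172,177,214,170,94,99,55,205,129,166,90,95,132,201,125,130,167,10,47,52,89,126,195,6,124,80,117,41,46,83,39,76,194,118,42,79,3,185,190,114,38,107,112,181,218,110,34,216,140,64,101,138,62,180,136,173,178,134,58,176,19,169,61,17,54,91,15,165,202,13,131,87,11,161,53,203,159,51,7,12,81,5,155,192,197,40,158,82,151,156,193,4,154,78,147,152,108,0,69,74,224,148,72,141,65,215,220,63,68,105,142,98,103,27,96,20,25,175,18,23,60,97,21,171,14,164,56,93,49,86,204,128,84,8,45,163,200,43,48,85,9,191,115,120,157,113,150,187,111,35,153,222,146,70,188,144,36,73,29,179,184,221,32,182,106,143,212]"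
lemma chk226: "chk 226 B226 C226" by code_simp
lemma inst226: "\<exists>Q. normalized_DCA 4 226 Q \<and> DCA_P1 4 226 Q \<and> DCA_P2 4 226 Q"
  by (rule gen[OF chk226]) simp

definition B250 :: "int list" where "B250 = [158,173,217,11,104,153,202,187,231,99,23,238,121,201,219,18,208,127,40,90,13,53,222,141,60,229,57,106,30,155,74,118,101,25,199,44,88,7,176,95,139,42,227,15,65,113,162,72,241,59,108,248,206,86,130,49,93,76,181,174,19,147,232,151,195,239,17,191,115,165,213,128,186,91,10,179,223,56,230,154,24,2,51,31,149,198,247,171,126,144,89,8,177,215,140,184,237,36,85,9,58,107,117,205,80,178,168,26,75,249,94,138,146,70,20,43,233,16,190,114,34,212,136,41,109,4,207,131,55,180,224,143,1,175,150,69,197,32,45,245,164,67,116,46,214,134,62,111,35,209,133,148,192,236,79,3,52,37,81,125,123,47,221,145,194,243,183,216,21,189,234,28,211,135,160,204,157,167,5,54,228,152,12,0,225,98,63,71,120,169,218,33,77,246,39,84,137,172,110,159,83,132,142,61,105,203,68,112,100,200,119,163,82,220,170,193,242,166,96,14,188,103,22,66,235,29,73,156,161,129,124,102,87,6,50,48,97,182,226,244,64,92,27,196,240,38,78,122,185,210]"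
definition C250 :: "int list" where "C250 = [20,86,73,185,188,230,147,8,120,148,190,81,149,55,233,150,141,3,26,102,235,76,63,50,162,24,237,29,71,97,84,196,114,156,198,19,6,118,105,217,79,242,53,201,152,160,77,238,100,203,245,61,204,35,22,9,246,164,95,248,69,207,43,155,142,129,42,209,126,202,210,176,44,25,137,249,111,4,171,213,184,172,89,145,48,215,132,49,80,133,179,41,153,51,127,239,52,94,11,178,220,12,23,221,122,180,96,139,56,98,169,31,99,16,117,225,216,59,101,18,39,227,144,0,103,224,62,229,21,47,159,146,189,231,107,219,232,68,191,167,154,192,109,240,193,214,27,194,236,28,195,136,123,110,113,30,72,58,170,157,115,32,74,116,158,75,66,34,40,243,14,1,119,161,212,199,37,173,121,38,205,247,108,206,82,165,181,124,166,208,125,241,228,90,168,64,2,163,211,128,45,87,223,85,197,130,46,33,131,7,244,106,218,91,67,175,92,134,140,93,10,226,88,200,187,174,36,54,135,138,234,222,83,70,57,15,182,143,5,183,104,17,78,65,177,60,151,13,186,112]"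
lemma chk250: "chk 250 B250 C250" by code_simp
lemma inst250: "\<exists>Q. normalized_DCA 4 250 Q \<and> DCA_P1 4 250 Q \<and> DCA_P2 4 250 Q"
  by (rule gen[OF chk250]) simp

definition B274 :: "int list" where "B274 = [84,242,238,72,230,226,60,218,214,48,44,40,173,32,190,161,182,41,12,145,4,137,158,129,13,258,5,250,109,105,101,234,118,251,247,243,77,98,69,202,86,219,53,211,45,203,199,195,191,187,21,179,175,34,167,138,159,267,126,147,6,114,135,268,264,260,256,115,223,107,215,74,95,91,62,58,54,75,71,42,200,196,55,188,22,43,176,10,143,164,272,131,127,123,7,252,111,244,265,124,232,228,87,245,241,212,96,204,88,221,192,51,184,68,39,35,168,52,185,181,177,36,144,140,273,269,16,261,8,141,112,108,104,125,233,229,225,246,80,213,97,205,64,222,193,189,73,206,65,61,57,165,49,157,153,37,33,166,25,133,17,262,9,254,1,134,130,263,122,93,89,85,81,239,210,231,227,198,194,78,186,207,178,174,170,29,162,46,154,150,146,142,26,271,18,14,259,255,139,110,106,102,235,94,90,248,82,103,236,70,66,224,220,79,50,183,67,38,171,30,163,47,155,151,172,31,2,23,19,15,148,119,3,136,132,240,99,257,116,249,83,216,237,208,92,63,59,217,76,209,180,201,197,56,27,160,156,152,11,169,28,24,20,128,149,120,253,0,270,266,100,121,117,113]"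
definition C274 :: "int list" where "C274 = [154,100,215,88,171,12,22,105,83,230,71,49,27,5,225,98,44,159,32,147,262,103,186,59,142,15,235,245,223,201,179,157,240,81,196,174,47,267,3,255,64,42,52,272,145,228,206,184,162,140,13,233,211,189,30,40,260,133,111,57,35,182,128,106,221,199,177,18,28,248,121,236,45,23,170,148,263,72,187,60,143,258,99,77,224,33,11,158,273,219,92,207,185,163,246,256,234,75,21,136,146,124,239,48,26,173,119,129,212,190,63,178,156,102,249,227,205,151,266,107,222,200,210,51,166,144,90,237,46,24,34,149,264,73,220,61,176,259,269,110,56,203,181,127,137,252,198,39,17,132,247,120,66,213,54,0,115,93,208,218,164,37,257,130,76,191,169,10,125,135,113,91,69,152,25,108,86,96,74,20,167,250,123,238,216,194,172,118,265,243,84,62,8,155,101,79,226,67,150,160,138,116,231,209,50,270,6,89,204,214,192,1,253,94,241,82,165,175,16,268,109,55,202,43,126,104,251,197,38,153,131,4,87,65,180,53,168,114,229,70,217,195,141,14,97,244,85,31,9,261,271,80,58,36,183,161,2,254,232,41,19,134,112,122,68,78,193,139,117,95,242,188,29,7]"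
lemma chk274: "chk 274 B274 C274" by code_simp
lemma inst274: "\<exists>Q. normalized_DCA 4 274 Q \<and> DCA_P1 4 274 Q \<and> DCA_P2 4 274 Q"
  by (rule gen[OF chk274]) simp

definition B298 :: "int list" where "B298 = [71,226,97,89,258,101,121,262,282,288,294,151,157,149,155,175,167,38,179,199,205,197,217,74,215,221,92,247,104,96,251,108,263,134,126,146,152,293,1,170,162,19,39,180,200,43,198,218,210,67,222,228,99,240,111,266,109,115,284,127,133,4,145,165,8,177,183,26,195,52,58,64,219,62,231,88,243,86,241,98,253,110,279,271,277,283,5,295,166,23,29,184,41,47,202,45,51,220,77,69,238,95,250,256,248,254,274,117,286,292,135,141,161,153,159,30,185,28,48,40,60,201,207,213,70,90,245,102,94,100,120,261,281,287,130,285,291,13,154,11,31,172,178,35,190,61,216,73,79,85,91,83,103,244,264,107,276,119,125,131,137,143,163,169,12,32,173,44,36,191,211,54,209,80,235,227,84,239,259,116,122,128,269,289,132,138,9,15,156,176,182,25,194,37,206,212,204,224,230,87,242,234,105,246,252,123,278,270,290,147,139,10,2,22,14,20,189,181,187,193,50,56,225,68,223,229,249,255,112,267,124,265,136,142,148,140,160,3,158,164,21,27,33,188,59,65,57,63,232,75,81,236,93,113,268,260,280,272,129,0,6,296,18,24,16,171,42,34,203,46,66,72,78,233,76,82,237,257,114,106,275,118,273,144,150,7,297,168,174,17,186,192,49,55,196,53,208,214]"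
definition C298 :: "int list" where "C298 = [235,282,36,227,130,172,75,266,20,67,263,161,59,101,297,51,242,145,38,239,137,179,82,278,22,69,121,168,66,257,6,53,100,3,45,97,144,186,233,285,178,225,128,170,73,115,13,65,256,5,52,248,2,44,96,292,185,232,135,177,224,276,169,72,114,166,213,255,158,205,252,150,197,90,291,189,236,129,27,223,270,19,71,262,11,58,259,152,204,251,149,196,243,141,188,230,277,180,78,120,23,70,117,15,206,104,7,198,250,148,190,88,140,33,229,281,30,221,273,17,218,260,9,56,103,155,202,249,142,40,92,283,37,84,126,24,220,123,16,63,264,8,55,102,0,201,99,295,193,91,287,31,83,125,28,219,122,164,62,258,156,54,106,153,46,247,289,43,234,132,35,226,124,176,74,116,163,210,113,160,207,254,147,199,241,288,191,89,280,34,81,272,26,217,269,18,209,112,10,57,253,146,49,240,138,41,237,279,182,80,271,25,216,119,12,208,111,4,200,98,294,192,95,286,184,231,134,181,79,275,173,215,267,165,212,105,157,50,246,293,42,238,136,183,86,133,175,222,274,167,214,261,159,211,109,151,203,245,143,195,93,284,187,85,127,174,77,268,171,64,265,14,61,108,1,48,244,296,194,87,139,32,228,131,29,76,118,21,68,110,162,60,107,154,47,94,290,39]"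
lemma chk298: "chk 298 B298 C298" by code_simp
lemma inst298: "\<exists>Q. normalized_DCA 4 298 Q \<and> DCA_P1 4 298 Q \<and> DCA_P2 4 298 Q"
  by (rule gen[OF chk298]) simp

definition B322 :: "int list" where "B322 = [67,76,51,221,103,112,121,291,300,148,157,132,302,23,159,41,177,59,68,238,213,61,70,274,283,258,301,310,319,294,142,312,160,169,212,60,69,78,248,62,266,275,89,259,141,150,286,295,143,25,34,9,18,222,231,79,215,63,267,242,251,133,108,278,126,135,144,314,35,10,53,223,198,46,250,64,234,243,252,134,304,152,161,170,306,154,163,172,181,29,199,47,90,260,74,117,253,101,305,153,1,298,307,189,3,207,55,30,73,48,57,261,75,84,93,263,145,281,129,138,308,317,38,174,22,31,40,210,92,262,271,280,128,264,146,155,130,139,309,318,200,209,218,32,202,245,254,229,272,247,290,265,147,156,4,13,183,192,201,49,24,33,42,85,255,230,239,87,96,105,114,123,5,14,311,193,7,211,186,195,43,86,256,104,240,88,131,106,276,124,6,176,185,194,203,17,187,196,44,214,257,232,80,284,293,268,116,320,168,16,313,0,204,52,27,36,206,249,97,72,115,285,99,303,151,321,8,178,26,162,205,19,28,71,241,216,98,107,277,125,100,109,118,127,136,179,188,197,45,54,224,233,81,56,226,269,244,287,296,110,119,289,171,180,316,37,173,182,225,39,82,91,227,270,279,288,297,111,315,2,11,20,190,165,208,217,65,235,83,219,228,237,246,94,137,273,282,164,12,21,191,166,175,184,66,236,50,220,102,77,120,95,299,113,122,292,140,149,158,167,15,58]"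
definition C322 :: "int list" where "C322 = [40,134,73,167,94,188,282,215,148,242,175,275,208,135,74,162,262,28,122,216,316,249,21,270,203,303,69,163,257,196,290,223,317,250,177,271,43,137,231,9,258,30,130,63,312,84,184,117,211,138,232,171,104,192,286,58,158,252,18,279,212,300,239,172,266,38,293,226,153,253,180,274,213,146,234,173,106,200,294,221,315,87,181,114,53,147,80,13,107,201,295,228,155,88,27,276,54,309,75,8,102,202,296,62,1,89,183,283,49,310,82,170,109,42,136,230,157,96,190,123,56,150,77,16,110,204,298,70,319,91,185,118,51,151,78,11,111,205,299,71,320,92,186,125,219,307,240,179,267,206,133,72,160,93,187,120,214,308,241,174,113,207,140,67,0,100,194,288,60,154,248,20,269,41,141,229,168,95,195,128,222,149,243,176,115,48,297,236,169,263,29,284,217,311,83,22,116,210,143,76,164,103,36,285,218,318,251,17,272,44,144,238,4,98,37,131,64,313,85,24,273,45,306,233,5,260,32,126,59,159,86,25,119,46,301,79,6,261,33,127,66,321,254,26,281,47,302,235,7,101,34,289,61,161,255,182,121,209,142,81,14,108,35,129,68,156,256,189,277,55,304,237,15,264,197,291,224,2,90,23,278,50,305,244,10,265,198,292,225,3,97,191,124,57,145,245,178,105,199,132,65,165,259,31,280,52,152,246,12,112,39,139,227,166,99,193,287,220,314,247,19,268]"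
lemma chk322: "chk 322 B322 C322" by code_simp
lemma inst322: "\<exists>Q. normalized_DCA 4 322 Q \<and> DCA_P1 4 322 Q \<and> DCA_P2 4 322 Q"
  by (rule gen[OF chk322]) simp

definition B346 :: "int list" where "B346 = [13,151,289,254,219,276,68,114,344,44,274,239,285,342,42,272,318,29,248,40,5,62,108,73,303,3,233,279,244,36,266,58,104,69,207,91,56,194,159,297,262,227,19,238,122,341,225,98,236,293,339,131,269,153,26,256,129,186,232,116,335,127,265,322,287,79,217,90,228,112,250,296,180,226,283,329,294,178,224,16,154,119,176,314,106,325,209,255,312,185,150,115,80,45,275,240,205,78,43,100,319,284,76,133,271,63,282,166,304,96,142,107,245,302,2,313,105,162,208,92,311,103,241,206,263,55,101,66,123,88,53,18,64,202,259,132,189,235,292,257,49,187,152,198,336,301,93,231,23,253,218,10,321,21,251,216,181,54,192,157,295,179,317,109,328,120,4,315,280,72,118,175,140,278,70,35,0,138,184,149,33,252,136,182,147,204,77,307,7,237,110,167,305,270,143,27,165,38,268,141,25,163,128,1,139,196,334,299,345,137,102,67,32,343,135,273,330,203,260,306,17,155,28,85,50,15,234,291,164,221,94,324,197,81,46,11,230,22,333,125,9,320,193,331,215,261,145,191,75,213,86,316,281,246,211,84,222,14,71,290,174,47,277,242,34,172,310,183,148,113,170,308,8,65,30,168,214,6,144,201,74,212,177,61,199,337,210,267,59,24,243,300,173,57,195,160,298,171,309,20,158,31,169,134,99,156,121,340,51,97,327,200,338,130,95,60,117,82,220,12,323,288,161,126,264,229,286,332,124,89,146,111,249,41,87,52,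190,247,39,258,223,188,326,37,83,48]"
definition C346 :: "int list" where "C346 = [94,332,224,116,8,197,262,30,219,333,3,241,182,25,139,328,269,112,226,291,10,199,140,205,48,162,5,119,11,249,92,330,271,163,228,71,136,28,266,158,223,288,180,121,310,251,267,208,100,289,230,295,187,203,317,160,274,290,231,247,188,80,145,334,53,118,183,124,16,32,97,211,227,341,184,298,17,206,147,212,277,342,12,77,142,256,99,213,56,170,62,300,19,257,273,165,57,171,63,252,193,258,150,166,58,123,237,253,318,210,151,43,108,297,65,130,22,38,152,168,282,1,66,304,320,39,326,45,234,126,191,83,24,89,278,46,235,176,192,84,149,41,106,220,285,4,69,134,26,215,107,172,64,178,21,86,324,265,157,49,287,303,195,260,201,93,109,174,239,131,245,261,153,218,110,2,67,132,246,138,154,268,111,225,117,306,74,90,31,47,161,177,242,307,75,91,156,270,286,54,70,135,200,141,33,222,114,6,293,185,250,315,207,272,337,229,72,186,202,143,159,51,338,181,73,311,79,95,36,52,339,9,296,312,204,96,37,275,340,59,248,313,81,319,335,276,292,60,76,314,255,98,336,55,120,61,299,18,34,148,164,105,294,13,78,316,35,322,214,279,122,14,301,144,209,101,42,280,345,15,302,194,259,102,167,232,0,189,254,146,87,103,44,233,125,190,82,196,88,104,169,283,175,240,305,321,40,327,343,284,127,68,133,198,263,155,344,236,128,20,85,323,264,329,221,113,129,243,308,27,216,281,173,238,179,244,309,325,217,331,50,115,7,23,137,29]"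
lemma chk346: "chk 346 B346 C346" by code_simp
lemma inst346: "\<exists>Q. normalized_DCA 4 346 Q \<and> DCA_P1 4 346 Q \<and> DCA_P2 4 346 Q"
  by (rule gen[OF chk346]) simp

theorem mainTheorem15:
  assumes "m \<in> {26, 266, 40, 56, 88, 104, 136, 152, 184, 200, 232, 248, 280, 296, 328, 344,
                34, 58, 82, 106, 130, 154, 178, 202, 226, 250, 274, 298, 322, 346 :: nat}"
  shows "\<exists>Q :: nat \<Rightarrow> nat \<Rightarrow> int. normalized_DCA 4 m Q \<and> DCA_P1 4 m Q \<and> DCA_P2 4 m Q"
proof -
  have "m = 26 \<or> m = 266 \<or> m = 40 \<or> m = 56 \<or> m = 88 \<or> m = 104 \<or> m = 136 \<or> m = 152 \<or> m = 184 \<or> m = 200 \<or> m = 232 \<or> m = 248 \<or> m = 280 \<or> m = 296 \<or> m = 328 \<or> m = 344 \<or> m = 34 \<or> m = 58 \<or> m = 82 \<or> m = 106 \<or> m = 130 \<or> m = 154 \<or> m = 178 \<or> m = 202 \<or> m = 226 \<or> m = 250 \<or> m = 274 \<or> m = 298 \<or> m = 322 \<or> m = 346" using assms by simp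
  then show ?thesis using inst26 inst266 inst40 inst56 inst88 inst104 inst136 inst152 inst184 inst200 inst232 inst248 inst280 inst296 inst328 inst344 inst34 inst58 inst82 inst106 inst130 inst154 inst178 inst202 inst226 inst250 inst274 inst298 inst322 inst346 by (elim disjE) simp_all
qed

end
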